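(* Let $\Omega\subseteq\mathbb{R}^3$ be a domain. If $b\colon\Omega\to\mathbb{R}$ is a real-valued biharmonic function (i.e. $\Delta_3^2 b=0$), then $\partial b\,\partial$ is inframonogenic and $\overline{\partial}\, b\,\overline{\partial}$ is antiinframonogenic. If $f=f_0+f_1e_1+f_2e_2\colon\Omega\to\mathbb{R}^3$ is inframonogenic or antiinframonogenic, then every component $f_i$ ($i=0,1,2$) of $f$ is biharmonic.
   Context: $\mathbb{H}$ denotes the real quaternions with basis $e_0=1,e_1,e_2,e_3$ and $e_1^2=e_2^2=e_3^2=e_1e_2e_3=-1$. $\mathbb{R}^3$ is identified with the reduced quaternions $x=x_0+x_1e_1+x_2e_2$. Write $\partial_i=\partial/\partial x_i$ and $\Delta_3=\partial_0^2+\partial_1^2+\partial_2^2$. For a (sufficiently differentiable) $\mathbb{H}$-valued function $f$, the left operators are $\overline{\partial} f=\partial_0 f+e_1\partial_1 f+e_2\partial_2 f$ and $\partial f=\partial_0 f-e_1\partial_1 f-e_2\partial_2 f$, and the right operators are $f\overline{\partial}=\partial_0 f+(\partial_1 f)e_1+(\partial_2 f)e_2$ and $f\partial=\partial_0 f-(\partial_1 f)e_1-(\partial_2 f)e_2$. The two-sided operators are $\overline{\partial} f\overline{\partial}:=\overline{\partial}(f\overline{\partial})=(\overline{\partial}f)\overline{\partial}$ and similarly $\partial f\partial$. A function $f$ is inframonogenic if $\overline{\partial} f\overline{\partial}=0$ and antiinframonogenic if $\partial f\partial=0$. A real function is biharmonic if $\Delta_3^2$ of it vanishes. *)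

theory Defs
  imports "HOL-Analysis.Analysis"
begin

datatype quat = Quat (qc0: real) (qc1: real) (qc2: real) (qc3: real)

definition qadd :: "quat \<Rightarrow> quat \<Rightarrow> quat" (infixl "\<oplus>\<^sub>H" 65) where
  "qadd p q = Quat (qc0 p + qc0 q) (qc1 p + qc1 q) (qc2 p + qc2 q) (qc3 p + qc3 q)"

text \<open>Hamilton product, with e1 e2 = e3, e2 e3 = e1, e3 e1 = e2, e_i^2 = -1
  (so that e1 e2 e3 = -1).\<close>
definition qmult :: "quat \<Rightarrow> quat \<Rightarrow> quat" (infixl "\<otimes>\<^sub>H" 70) where
  "qmult p q = Quat
     (qc0 p * qc0 q - qc1 p * qc1 q - qc2 p * qc2 q - qc3 p * qc3 q)
     (qc0 p * qc1 q + qc1 p * qc0 q + qc2 p * qc3 q - qc3 p * qc2 q)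
     (qc0 p * qc2 q - qc1 p * qc3 q + qc2 p * qc0 q + qc3 p * qc1 q)
     (qc0 p * qc3 q + qc1 p * qc2 q - qc2 p * qc1 q + qc3 p * qc0 q)"

definition qneg :: "quat \<Rightarrow> quat" where
  "qneg q = Quat (- qc0 q) (- qc1 q) (- qc2 q) (- qc3 q)"

definition qzero :: quat where "qzero = Quat 0 0 0 0"
definition qe1 :: quat where "qe1 = Quat 0 1 0 0"
definition qe2 :: quat where "qe2 = Quat 0 0 1 0"

definition qreal :: "real \<Rightarrow> quat" where "qreal r = Quat r 0 0 0"

type_synonym R3 = "real \<times> real \<times> real"

definition dir :: "nat \<Rightarrow> R3" where
  "dir i = (if i = 0 then (1, 0, 0) else if i = 1 then (0, 1, 0) else (0, 0, 1))"

definition pd :: "nat \<Rightarrow> (R3 \<Rightarrow> real) \<Rightarrow> R3 \<Rightarrow> real" where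
  "pd i g x = deriv (\<lambda>t. g (x + t *\<^sub>R dir i)) 0"

fun pds :: "nat list \<Rightarrow> (R3 \<Rightarrow> real) \<Rightarrow> R3 \<Rightarrow> real" where
  "pds [] g = g"
| "pds (i # is) g = pd i (pds is g)"

definition smooth_on :: "R3 set \<Rightarrow> (R3 \<Rightarrow> real) \<Rightarrow> bool" where
  "smooth_on \<Omega> g \<longleftrightarrow>
     (\<forall>is. (\<forall>i\<in>set is. i < 3) \<longrightarrow>
        continuous_on \<Omega> (pds is g) \<and>
        (\<forall>i<3. \<forall>x\<in>\<Omega>. (\<lambda>t. pds is g (x + t *\<^sub>R dir i)) differentiable (at 0)))"

definition laplace3 :: "(R3 \<Rightarrow> real) \<Rightarrow> R3 \<Rightarrow> real" where
  "laplace3 g x = pd 0 (pd 0 g) x + pd 1 (pd 1 g) x + pd 2 (pd 2 g) x"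

definition biharmonic_on :: "R3 set \<Rightarrow> (R3 \<Rightarrow> real) \<Rightarrow> bool" where
  "biharmonic_on \<Omega> g \<longleftrightarrow> (\<forall>x\<in>\<Omega>. laplace3 (laplace3 g) x = 0)"

definition qpd :: "nat \<Rightarrow> (R3 \<Rightarrow> quat) \<Rightarrow> R3 \<Rightarrow> quat" where
  "qpd i f x = Quat (pd i (\<lambda>y. qc0 (f y)) x) (pd i (\<lambda>y. qc1 (f y)) x)
                    (pd i (\<lambda>y. qc2 (f y)) x) (pd i (\<lambda>y. qc3 (f y)) x)"

definition qsmooth_on :: "R3 set \<Rightarrow> (R3 \<Rightarrow> quat) \<Rightarrow> bool" where
  "qsmooth_on \<Omega> f \<longleftrightarrow> smooth_on \<Omega> (\<lambda>y. qc0 (f y)) \<and> smooth_on \<Omega> (\<lambda>y. qc1 (f y))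
      \<and> smooth_on \<Omega> (\<lambda>y. qc2 (f y)) \<and> smooth_on \<Omega> (\<lambda>y. qc3 (f y))"

definition dbarL :: "(R3 \<Rightarrow> quat) \<Rightarrow> R3 \<Rightarrow> quat" where
  "dbarL f x = qpd 0 f x \<oplus>\<^sub>H qe1 \<otimes>\<^sub>H qpd 1 f x \<oplus>\<^sub>H qe2 \<otimes>\<^sub>H qpd 2 f x"

definition dL :: "(R3 \<Rightarrow> quat) \<Rightarrow> R3 \<Rightarrow> quat" where
  "dL f x = qpd 0 f x \<oplus>\<^sub>H qneg (qe1 \<otimes>\<^sub>H qpd 1 f x) \<oplus>\<^sub>H qneg (qe2 \<otimes>\<^sub>H qpd 2 f x)"

definition dbarR :: "(R3 \<Rightarrow> quat) \<Rightarrow> R3 \<Rightarrow> quat" where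
  "dbarR f x = qpd 0 f x \<oplus>\<^sub>H qpd 1 f x \<otimes>\<^sub>H qe1 \<oplus>\<^sub>H qpd 2 f x \<otimes>\<^sub>H qe2"

definition dR :: "(R3 \<Rightarrow> quat) \<Rightarrow> R3 \<Rightarrow> quat" where
  "dR f x = qpd 0 f x \<oplus>\<^sub>H qneg (qpd 1 f x \<otimes>\<^sub>H qe1) \<oplus>\<^sub>H qneg (qpd 2 f x \<otimes>\<^sub>H qe2)"

text \<open>Two-sided operators: dbar f dbar := dbar (f dbar), d f d := d (f d).\<close>
definition dbar2 :: "(R3 \<Rightarrow> quat) \<Rightarrow> R3 \<Rightarrow> quat" where
  "dbar2 f = dbarL (dbarR f)"

definition d2 :: "(R3 \<Rightarrow> quat) \<Rightarrow> R3 \<Rightarrow> quat" where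
  "d2 f = dL (dR f)"

definition inframonogenic_on :: "R3 set \<Rightarrow> (R3 \<Rightarrow> quat) \<Rightarrow> bool" where
  "inframonogenic_on \<Omega> f \<longleftrightarrow> (\<forall>x\<in>\<Omega>. dbar2 f x = qzero)"

definition antiinframonogenic_on :: "R3 set \<Rightarrow> (R3 \<Rightarrow> quat) \<Rightarrow> bool" where
  "antiinframonogenic_on \<Omega> f \<longleftrightarrow> (\<forall>x\<in>\<Omega>. d2 f x = qzero)"

end

theory Submission
  imports Defs
begin

lemma norm_dir[simp]: "norm (dir i) = 1"
  by (simp add: dir_def norm_Pair)

lemma eventually_line:
  assumes "open \<Omega>" "x \<in> \<Omega>"
  shows "eventually (\<lambda>t::real. x + t *\<^sub>R dir i \<in> \<Omega>) (nhds 0)"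
proof -
  obtain e where e: "e > 0" "ball x e \<subseteq> \<Omega>" using assms openE by blast
  show ?thesis unfolding eventually_nhds_metric
  proof (intro exI[of _ e] conjI allI impI)
    fix t :: real assume "dist t 0 < e"
    then have "x + t *\<^sub>R dir i \<in> ball x e" by (simp add: dist_norm)
    then show "x + t *\<^sub>R dir i \<in> \<Omega>" using e by blast
  qed (use e in auto)
qed

lemma pd_cong:
  assumes "open \<Omega>" "x \<in> \<Omega>" "\<And>y. y \<in> \<Omega> \<Longrightarrow> F y = G y"
  shows "pd i F x = pd i G x"
  unfolding pd_def
proof (rule deriv_cong_ev[OF _ refl])
  show "\<forall>\<^sub>F t in nhds 0. F (x + t *\<^sub>R dir i) = G (x + t *\<^sub>R dir i)"
    using eventually_line[OF assms(1,2), of i] by eventually_elim (simp add: assms(3))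
qed

lemma diff_cong_ev:
  fixes f g :: "real \<Rightarrow> real"
  assumes "f differentiable (at x)" "eventually (\<lambda>t. f t = g t) (nhds x)"
  shows "g differentiable (at x)"
proof -
  from assms(1) obtain D where "DERIV f x :> D" by (auto simp: real_differentiable_def)
  then have "DERIV g x :> D" using DERIV_cong_ev[OF refl assms(2) refl] by simp
  then show ?thesis by (auto simp: real_differentiable_def)
qed

lemma pd_deriv_line:
  assumes "(\<lambda>s. H (y + s *\<^sub>R dir k)) differentiable (at 0)" "y = y0 + t0 *\<^sub>R dir k"
  shows "((\<lambda>t. H (y0 + t *\<^sub>R dir k)) has_real_derivative pd k H y) (at t0)"
proof -
  have "((\<lambda>s. H (y + s *\<^sub>R dir k)) has_real_derivative pd k H y) (at (t0 + - t0))"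
    using assms(1) unfolding pd_def by (simp add: DERIV_deriv_iff_real_differentiable)
  then have "((\<lambda>t. H (y + (t + - t0) *\<^sub>R dir k)) has_real_derivative pd k H y) (at t0)"
    using DERIV_shift[of "\<lambda>s. H (y + s *\<^sub>R dir k)" "pd k H y" t0 "-t0"] by simp
  moreover have "\<And>t. y + (t + - t0) *\<^sub>R dir k = y0 + t *\<^sub>R dir k"
    using assms(2) by (simp add: algebra_simps)
  ultimately show ?thesis by simp
qed

lemma pd_lin:
  assumes "(\<lambda>t. F (x + t *\<^sub>R dir i)) differentiable (at 0)"
    "(\<lambda>t. G (x + t *\<^sub>R dir i)) differentiable (at 0)"
  shows "pd i (\<lambda>y. a * F y + b * G y) x = a * pd i F x + b * pd i G x"
proof -
  have 1: "((\<lambda>t. F (x + t *\<^sub>R dir i)) has_real_derivative pd i F x) (at 0)"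
    using assms(1) unfolding pd_def by (simp add: DERIV_deriv_iff_real_differentiable)
  have 2: "((\<lambda>t. G (x + t *\<^sub>R dir i)) has_real_derivative pd i G x) (at 0)"
    using assms(2) unfolding pd_def by (simp add: DERIV_deriv_iff_real_differentiable)
  have "((\<lambda>t. a * F (x + t *\<^sub>R dir i) + b * G (x + t *\<^sub>R dir i)) has_real_derivative
      a * pd i F x + b * pd i G x) (at 0)"
    by (intro DERIV_add DERIV_cmult 1 2)
  then show ?thesis unfolding pd_def by (rule DERIV_imp_deriv)
qed

lemma pd_const[simp]: "pd i (\<lambda>y. c) = (\<lambda>y. 0)"
  unfolding pd_def by (intro ext DERIV_imp_deriv) simp

lemma pds_append: "pds (as @ bs) F = pds as (pds bs F)"
  by (induction as) auto

lemma smooth_pds: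
  assumes "smooth_on \<Omega> F" "\<forall>i\<in>set js. i < 3"
  shows "smooth_on \<Omega> (pds js F)"
  unfolding smooth_on_def
proof (intro allI impI)
  fix "is" :: "nat list" assume "\<forall>i\<in>set is. i < 3"
  then have "\<forall>i\<in>set (is @ js). i < 3" using assms(2) by auto
  then show "continuous_on \<Omega> (pds is (pds js F)) \<and>
    (\<forall>i<3. \<forall>x\<in>\<Omega>. (\<lambda>t. pds is (pds js F) (x + t *\<^sub>R dir i)) differentiable (at 0))"
    using assms(1) unfolding smooth_on_def by (drule_tac x="is @ js" in spec) (simp add: pds_append)
qed

lemma smooth_cont: "smooth_on \<Omega> F \<Longrightarrow> continuous_on \<Omega> F"
  unfolding smooth_on_def by (drule spec[of _ "[]"]) simp

lemma smooth_dd: "smooth_on \<Omega> F \<Longrightarrow> i < 3 \<Longrightarrow> x \<in> \<Omega> \<Longrightarrow> (\<lambda>t. F (x + t *\<^sub>R dir i)) differentiable (at 0)"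
  unfolding smooth_on_def by (drule spec[of _ "[]"]) simp

lemma pds_lin:
  assumes "open \<Omega>" "smooth_on \<Omega> F" "smooth_on \<Omega> G" "\<forall>i\<in>set is. i < 3"
  shows "x \<in> \<Omega> \<Longrightarrow> pds is (\<lambda>y. a * F y + b * G y) x = a * pds is F x + b * pds is G x"
  using assms(4)
proof (induction "is" arbitrary: x)
  case Nil then show ?case by simp
next
  case (Cons k "is")
  have "pds (k # is) (\<lambda>y. a * F y + b * G y) x = pd k (pds is (\<lambda>y. a * F y + b * G y)) x"
    by simp
  also have "\<dots> = pd k (\<lambda>y. a * pds is F y + b * pds is G y) x"
    by (rule pd_cong[OF assms(1) Cons.prems(1)]) (use Cons.IH Cons.prems(2) in simp)
  also have "\<dots> = a * pd k (pds is F) x + b * pd k (pds is G) x"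
    using Cons assms by (intro pd_lin smooth_dd smooth_pds) auto
  finally show ?case by simp
qed

lemma smooth_lin:
  assumes "open \<Omega>" "smooth_on \<Omega> F" "smooth_on \<Omega> G"
  shows "smooth_on \<Omega> (\<lambda>y. a * F y + b * G y)"
  unfolding smooth_on_def
proof (intro allI impI conjI ballI)
  fix "is" :: "nat list" assume is3: "\<forall>i\<in>set is. i < 3"
  have eq: "\<And>x. x \<in> \<Omega> \<Longrightarrow> pds is (\<lambda>y. a * F y + b * G y) x = a * pds is F x + b * pds is G x"
    by (rule pds_lin[OF assms is3])
  have "continuous_on \<Omega> (\<lambda>x. a * pds is F x + b * pds is G x)"
    by (intro continuous_on_add continuous_on_mult continuous_on_const
        smooth_cont[OF smooth_pds[OF assms(2) is3]] smooth_cont[OF smooth_pds[OF assms(3) is3]])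
  then show "continuous_on \<Omega> (pds is (\<lambda>y. a * F y + b * G y))"
    by (rule continuous_on_eq) (simp add: eq)
  fix i :: nat and x assume i: "i < 3" and x: "x \<in> \<Omega>"
  have "(\<lambda>t. a * pds is F (x + t *\<^sub>R dir i) + b * pds is G (x + t *\<^sub>R dir i)) differentiable (at 0)"
    using smooth_dd[OF smooth_pds[OF assms(2) is3] i x] smooth_dd[OF smooth_pds[OF assms(3) is3] i x]
    by (intro differentiable_add differentiable_mult differentiable_const)
  moreover have "\<forall>\<^sub>F t in nhds 0. a * pds is F (x + t *\<^sub>R dir i) + b * pds is G (x + t *\<^sub>R dir i)
      = pds is (\<lambda>y. a * F y + b * G y) (x + t *\<^sub>R dir i)"
    using eventually_line[OF assms(1) x, of i] by eventually_elim (simp add: eq)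
  ultimately show "(\<lambda>t. pds is (\<lambda>y. a * F y + b * G y) (x + t *\<^sub>R dir i)) differentiable (at 0)"
    by (rule diff_cong_ev)
qed


lemma norm_sc: "norm (t *\<^sub>R dir i) = \<bar>t\<bar>" by simp

lemma mixed_mvt:
  assumes "open \<Omega>" "smooth_on \<Omega> G" "i < 3" "j < 3" "ball x r \<subseteq> \<Omega>" "0 < h" "2*h < r"
  shows "\<exists>p. dist p x \<le> 2*h \<and>
     G (x + h *\<^sub>R dir j + h *\<^sub>R dir i) - G (x + h *\<^sub>R dir i) - G (x + h *\<^sub>R dir j) + G x
       = h^2 * pd j (pd i G) p"
proof -
  define u where "u = dir i"
  define v where "v = dir j"
  have inb: "x + s *\<^sub>R u + t *\<^sub>R v \<in> \<Omega>" if "0 \<le> s" "s \<le> h" "0 \<le> t" "t \<le> h" for s t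
  proof -
    have "norm (s *\<^sub>R u + t *\<^sub>R v) \<le> norm (s *\<^sub>R u) + norm (t *\<^sub>R v)" by (rule norm_triangle_ineq)
    also have "\<dots> \<le> 2 * h" using that by (simp add: u_def v_def)
    finally have "dist (x + s *\<^sub>R u + t *\<^sub>R v) x < r" using assms(7)
      by (simp add: dist_norm add.assoc)
    then show ?thesis using assms(5) by (auto simp: dist_commute)
  qed
  define \<phi> where "\<phi> s = G ((x + h *\<^sub>R v) + s *\<^sub>R u) - G (x + s *\<^sub>R u)" for s
  have d\<phi>: "(\<phi> has_real_derivative (pd i G (x + h *\<^sub>R v + s *\<^sub>R u) - pd i G (x + s *\<^sub>R u))) (at s)"
    if "0 \<le> s" "s \<le> h" for s
  proof -
    have m1: "x + h *\<^sub>R v + s *\<^sub>R u \<in> \<Omega>" using inb[of s h] that assms(6)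
      by (simp add: algebra_simps)
    have m2: "x + s *\<^sub>R u \<in> \<Omega>" using inb[of s 0] that assms(6) by simp
    show ?thesis unfolding \<phi>_def[abs_def] u_def
      by (intro DERIV_diff pd_deriv_line smooth_dd[OF assms(2) assms(3)])
        (use m1 m2 in \<open>auto simp: u_def\<close>)
  qed
  obtain \<xi> where \<xi>: "0 < \<xi>" "\<xi> < h"
    "\<phi> h - \<phi> 0 = (h - 0) * (pd i G (x + h *\<^sub>R v + \<xi> *\<^sub>R u) - pd i G (x + \<xi> *\<^sub>R u))"
    using MVT2[OF assms(6), of \<phi> "\<lambda>s. pd i G (x + h *\<^sub>R v + s *\<^sub>R u) - pd i G (x + s *\<^sub>R u)"] d\<phi> by auto
  define \<psi> where "\<psi> t = pd i G ((x + \<xi> *\<^sub>R u) + t *\<^sub>R v)" for t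
  have sm: "smooth_on \<Omega> (pd i G)" using smooth_pds[OF assms(2), of "[i]"] assms(3) by simp
  have d\<psi>: "(\<psi> has_real_derivative pd j (pd i G) (x + \<xi> *\<^sub>R u + t *\<^sub>R v)) (at t)"
    if "0 \<le> t" "t \<le> h" for t
  proof -
    have m1: "x + \<xi> *\<^sub>R u + t *\<^sub>R v \<in> \<Omega>" using inb[of \<xi> t] that \<xi> by simp
    show ?thesis unfolding \<psi>_def[abs_def] v_def
      by (intro pd_deriv_line smooth_dd[OF sm assms(4)]) (use m1 in \<open>auto simp: v_def\<close>)
  qed
  obtain \<eta> where \<eta>: "0 < \<eta>" "\<eta> < h"
    "\<psi> h - \<psi> 0 = (h - 0) * pd j (pd i G) (x + \<xi> *\<^sub>R u + \<eta> *\<^sub>R v)"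
    using MVT2[OF assms(6), of \<psi> "\<lambda>t. pd j (pd i G) (x + \<xi> *\<^sub>R u + t *\<^sub>R v)"] d\<psi> by auto
  have "dist (x + \<xi> *\<^sub>R u + \<eta> *\<^sub>R v) x = norm (\<xi> *\<^sub>R u + \<eta> *\<^sub>R v)"
    by (simp add: dist_norm add.assoc)
  also have "\<dots> \<le> norm (\<xi> *\<^sub>R u) + norm (\<eta> *\<^sub>R v)" by (rule norm_triangle_ineq)
  also have "\<dots> \<le> 2 * h" using \<xi> \<eta> by (simp add: u_def v_def)
  finally have dp: "dist (x + \<xi> *\<^sub>R u + \<eta> *\<^sub>R v) x \<le> 2 * h" .
  have Ph: "\<psi> h = pd i G (x + h *\<^sub>R v + \<xi> *\<^sub>R u)" unfolding \<psi>_def by (simp add: algebra_simps)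
  have P0: "\<psi> 0 = pd i G (x + \<xi> *\<^sub>R u)" unfolding \<psi>_def by simp
  have "\<phi> h - \<phi> 0 = h * (\<psi> h - \<psi> 0)" using \<xi>(3) unfolding Ph P0 by simp
  also have "\<dots> = h^2 * pd j (pd i G) (x + \<xi> *\<^sub>R u + \<eta> *\<^sub>R v)"
    using \<eta>(3) by (simp add: power2_eq_square)
  finally have key: "\<phi> h - \<phi> 0 = h^2 * pd j (pd i G) (x + \<xi> *\<^sub>R u + \<eta> *\<^sub>R v)" .
  have G\<phi>: "\<phi> h - \<phi> 0 = G (x + h *\<^sub>R dir j + h *\<^sub>R dir i) - G (x + h *\<^sub>R dir i) - G (x + h *\<^sub>R dir j) + G x"
    unfolding \<phi>_def u_def v_def by simp
  show ?thesis
  proof (rule exI, rule conjI)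
    show "dist (x + \<xi> *\<^sub>R u + \<eta> *\<^sub>R v) x \<le> 2 * h" by (rule dp)
    show "G (x + h *\<^sub>R dir j + h *\<^sub>R dir i) - G (x + h *\<^sub>R dir i) - G (x + h *\<^sub>R dir j) + G x
       = h^2 * pd j (pd i G) (x + \<xi> *\<^sub>R u + \<eta> *\<^sub>R v)" using key G\<phi> by linarith
  qed
qed

lemma clairaut:
  assumes "open \<Omega>" "smooth_on \<Omega> G" "i < 3" "j < 3" "x \<in> \<Omega>"
  shows "pd j (pd i G) x = pd i (pd j G) x"
proof (rule ccontr)
  define A where "A = pd j (pd i G)"
  define B where "B = pd i (pd j G)"
  assume ne: "pd j (pd i G) x \<noteq> pd i (pd j G) x"
  define e where "e = \<bar>A x - B x\<bar> / 2"
  have e: "e > 0" using ne by (simp add: e_def A_def B_def)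
  obtain r where r: "r > 0" "ball x r \<subseteq> \<Omega>" using assms(1,5) openE by blast
  have cA: "isCont A x"
    using smooth_cont[OF smooth_pds[OF assms(2), of "[j,i]"]] assms continuous_on_eq_continuous_at
    by (auto simp: A_def)
  have cB: "isCont B x"
    using smooth_cont[OF smooth_pds[OF assms(2), of "[i,j]"]] assms continuous_on_eq_continuous_at
    by (auto simp: B_def)
  obtain dA where dA: "dA > 0" "\<And>y. y \<noteq> x \<Longrightarrow> norm (y - x) < dA \<Longrightarrow> norm (A y - A x) < e"
    using cA e unfolding isCont_def LIM_eq by blast
  obtain dB where dB: "dB > 0" "\<And>y. y \<noteq> x \<Longrightarrow> norm (y - x) < dB \<Longrightarrow> norm (B y - B x) < e"
    using cB e unfolding isCont_def LIM_eq by blast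
  define h where "h = min r (min dA dB) / 4"
  have h: "h > 0" "2 * h < r" "2 * h < dA" "2 * h < dB" using r dA dB by (auto simp: h_def)
  obtain p where p: "dist p x \<le> 2*h"
     "G (x + h *\<^sub>R dir j + h *\<^sub>R dir i) - G (x + h *\<^sub>R dir i) - G (x + h *\<^sub>R dir j) + G x
       = h^2 * A p"
    using mixed_mvt[OF assms(1-4) r(2) h(1,2)] unfolding A_def by blast
  obtain q where q: "dist q x \<le> 2*h"
     "G (x + h *\<^sub>R dir i + h *\<^sub>R dir j) - G (x + h *\<^sub>R dir j) - G (x + h *\<^sub>R dir i) + G x
       = h^2 * B q"
    using mixed_mvt[OF assms(1) assms(2) assms(4) assms(3) r(2) h(1,2)] unfolding B_def by blast
  have eqp: "x + h *\<^sub>R dir i + h *\<^sub>R dir j = x + h *\<^sub>R dir j + h *\<^sub>R dir i" by (simp add: algebra_simps)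
  have "h^2 * A p = h^2 * B q" using p(2) q(2)[unfolded eqp] by linarith
  then have ApBq: "A p = B q" using h by simp
  have "\<bar>A p - A x\<bar> < e"
  proof (cases "p = x")
    case False
    have "norm (p - x) < dA" using p(1) h(3) by (simp add: dist_norm)
    then show ?thesis using dA(2)[OF False] by simp
  qed (use e in simp)
  moreover have "\<bar>B q - B x\<bar> < e"
  proof (cases "q = x")
    case False
    have "norm (q - x) < dB" using q(1) h(4) by (simp add: dist_norm)
    then show ?thesis using dB(2)[OF False] by simp
  qed (use e in simp)
  ultimately have "\<bar>A x - B x\<bar> < 2 * e" using ApBq by linarith
  moreover have "2 * e = \<bar>A x - B x\<bar>" unfolding e_def by simp
  ultimately show False by linarith
qed

lemma pds_insort:
  assumes "open \<Omega>" "smooth_on \<Omega> F" "i < 3"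
  shows "\<forall>k\<in>set js. k < 3 \<Longrightarrow> x \<in> \<Omega> \<Longrightarrow> pds (i # js) F x = pds (insort i js) F x"
proof (induction js arbitrary: x)
  case Nil then show ?case by simp
next
  case (Cons j js)
  show ?case
  proof (cases "i \<le> j")
    case True then show ?thesis by simp
  next
    case False
    have sm: "smooth_on \<Omega> (pds js F)" using smooth_pds[OF assms(2)] Cons.prems by simp
    have "pds (i # j # js) F x = pd i (pd j (pds js F)) x" by simp
    also have "\<dots> = pd j (pd i (pds js F)) x"
      using clairaut[OF assms(1) sm, of j i x] Cons.prems assms(3) by simp
    also have "\<dots> = pd j (pds (insort i js) F) x"
      using Cons by (intro pd_cong[OF assms(1)]) auto
    finally show ?thesis using False by simp
  qed
qed

lemma pds_sort:
  assumes "open \<Omega>" "smooth_on \<Omega> F"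
  shows "\<forall>k\<in>set is. k < 3 \<Longrightarrow> x \<in> \<Omega> \<Longrightarrow> pds is F x = pds (sort is) F x"
proof (induction "is" arbitrary: x)
  case Nil then show ?case by simp
next
  case (Cons i "is")
  have "pds (i # is) F x = pd i (pds is F) x" by simp
  also have "\<dots> = pd i (pds (sort is) F) x"
    by (rule pd_cong[OF assms(1) Cons.prems(2)]) (use Cons.IH Cons.prems(1) in simp)
  also have "\<dots> = pds (i # sort is) F x" by simp
  also have "\<dots> = pds (insort i (sort is)) F x"
    using Cons.prems assms by (intro pds_insort) auto
  finally show ?case by simp
qed



lemma pd_pds: "pd i F = pds [i] F" by simp
lemma pds_pds: "pds as (pds bs F) = pds (as @ bs) F" by (simp add: pds_append)
lemma pds_Nil: "pds [] F = F" by simp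

lemma pds_const_Cons: "pds (i # is) (\<lambda>y. c) = (\<lambda>y. 0)"
  by (induction "is" arbitrary: i) auto

lemma smooth_const: "smooth_on \<Omega> (\<lambda>y. c)"
  unfolding smooth_on_def
proof (intro allI impI)
  fix "is" :: "nat list"
  obtain d where d: "pds is (\<lambda>y. c) = (\<lambda>y. d)"
  proof (cases "is")
    case Nil then show thesis using that[of c] by simp
  next
    case (Cons i js) then show thesis using that[of 0] by (simp only: pds_const_Cons)
  qed
  show "continuous_on \<Omega> (pds is (\<lambda>y. c)) \<and>
    (\<forall>i<3. \<forall>x\<in>\<Omega>. (\<lambda>t. pds is (\<lambda>y. c) (x + t *\<^sub>R dir i)) differentiable at 0)"
    unfolding d by simp
qed

lemma smooth_add:
  "open \<Omega> \<Longrightarrow> smooth_on \<Omega> F \<Longrightarrow> smooth_on \<Omega> G \<Longrightarrow> smooth_on \<Omega> (\<lambda>y. F y + G y)"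
  using smooth_lin[of \<Omega> F G 1 1] by simp
lemma smooth_diff:
  "open \<Omega> \<Longrightarrow> smooth_on \<Omega> F \<Longrightarrow> smooth_on \<Omega> G \<Longrightarrow> smooth_on \<Omega> (\<lambda>y. F y - G y)"
  using smooth_lin[of \<Omega> F G 1 "-1"] by simp
lemma smooth_neg:
  "open \<Omega> \<Longrightarrow> smooth_on \<Omega> F \<Longrightarrow> smooth_on \<Omega> (\<lambda>y. - F y)"
  using smooth_lin[of \<Omega> F F "-1" 0] by simp
lemma smooth_cmult:
  "open \<Omega> \<Longrightarrow> smooth_on \<Omega> F \<Longrightarrow> smooth_on \<Omega> (\<lambda>y. c * F y)"
  using smooth_lin[of \<Omega> F F c 0] by simp

lemma pds_add:
  "open \<Omega> \<Longrightarrow> x \<in> \<Omega> \<Longrightarrow> smooth_on \<Omega> F \<Longrightarrow> smooth_on \<Omega> G \<Longrightarrow> \<forall>i\<in>set is. i < 3 \<Longrightarrow>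
    pds is (\<lambda>y. F y + G y) x = pds is F x + pds is G x"
  using pds_lin[of \<Omega> F G "is" x 1 1] by simp
lemma pds_diff:
  "open \<Omega> \<Longrightarrow> x \<in> \<Omega> \<Longrightarrow> smooth_on \<Omega> F \<Longrightarrow> smooth_on \<Omega> G \<Longrightarrow> \<forall>i\<in>set is. i < 3 \<Longrightarrow>
    pds is (\<lambda>y. F y - G y) x = pds is F x - pds is G x"
  using pds_lin[of \<Omega> F G "is" x 1 "-1"] by simp
lemma pds_neg:
  "open \<Omega> \<Longrightarrow> x \<in> \<Omega> \<Longrightarrow> smooth_on \<Omega> F \<Longrightarrow> \<forall>i\<in>set is. i < 3 \<Longrightarrow>
    pds is (\<lambda>y. - F y) x = - pds is F x"
  using pds_lin[of \<Omega> F F "is" x "-1" 0] by simp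
lemma pds_cmult:
  "open \<Omega> \<Longrightarrow> x \<in> \<Omega> \<Longrightarrow> smooth_on \<Omega> F \<Longrightarrow> \<forall>i\<in>set is. i < 3 \<Longrightarrow>
    pds is (\<lambda>y. c * F y) x = c * pds is F x"
  using pds_lin[of \<Omega> F F "is" x c 0] by simp

lemma pds_sort':
  "sort is \<noteq> is \<Longrightarrow> open \<Omega> \<Longrightarrow> x \<in> \<Omega> \<Longrightarrow> smooth_on \<Omega> F \<Longrightarrow> \<forall>i\<in>set is. i < 3 \<Longrightarrow>
    pds is F x = pds (sort is) F x"
  using pds_sort by blast

lemma laplace3_fun: "laplace3 g = (\<lambda>x. pd 0 (pd 0 g) x + pd 1 (pd 1 g) x + pd 2 (pd 2 g) x)"
  by (rule ext) (simp add: laplace3_def)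

lemmas E = pd_pds pds_pds pds_Nil pds_const_Cons smooth_const smooth_add smooth_diff smooth_neg
  smooth_cmult pds_add pds_diff pds_neg pds_cmult smooth_pds laplace3_fun
  dbar2_def d2_def dbarL_def dbarR_def dL_def dR_def qpd_def qadd_def qmult_def qneg_def qe1_def qe2_def

lemma I12:
  assumes "open \<Omega>" "qsmooth_on \<Omega> f" "x \<in> \<Omega>"
  shows "qc0 (dbar2 (d2 f) x) = laplace3 (laplace3 (\<lambda>y. qc0 (f y))) x \<and>
         qc1 (dbar2 (d2 f) x) = laplace3 (laplace3 (\<lambda>y. qc1 (f y))) x \<and>
         qc2 (dbar2 (d2 f) x) = laplace3 (laplace3 (\<lambda>y. qc2 (f y))) x \<and>
         qc3 (dbar2 (d2 f) x) = laplace3 (laplace3 (\<lambda>y. qc3 (f y))) x \<and>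
         qc0 (d2 (dbar2 f) x) = laplace3 (laplace3 (\<lambda>y. qc0 (f y))) x \<and>
         qc1 (d2 (dbar2 f) x) = laplace3 (laplace3 (\<lambda>y. qc1 (f y))) x \<and>
         qc2 (d2 (dbar2 f) x) = laplace3 (laplace3 (\<lambda>y. qc2 (f y))) x \<and>
         qc3 (d2 (dbar2 f) x) = laplace3 (laplace3 (\<lambda>y. qc3 (f y))) x"
proof -
  have s: "smooth_on \<Omega> (\<lambda>y. qc0 (f y))" "smooth_on \<Omega> (\<lambda>y. qc1 (f y))"
     "smooth_on \<Omega> (\<lambda>y. qc2 (f y))" "smooth_on \<Omega> (\<lambda>y. qc3 (f y))"
    using assms(2) by (auto simp: qsmooth_on_def)
  show ?thesis
    using assms(1,3) s
    apply (simp add: E del: pds.simps)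
    apply (simp add: pds_sort' del: pds.simps)
    done
qed

lemma qpd_cong:
  assumes "open \<Omega>" "x \<in> \<Omega>" "\<And>y. y \<in> \<Omega> \<Longrightarrow> G y = H y"
  shows "qpd i G x = qpd i H x"
proof -
  have "\<And>g. pd i (\<lambda>y. g (G y)) x = pd i (\<lambda>y. g (H y)) x"
    by (rule pd_cong[OF assms(1,2)]) (simp add: assms(3))
  then show ?thesis unfolding qpd_def by simp
qed

lemma dR_cong: "open \<Omega> \<Longrightarrow> x \<in> \<Omega> \<Longrightarrow> (\<And>y. y \<in> \<Omega> \<Longrightarrow> G y = H y) \<Longrightarrow> dR G x = dR H x"
  unfolding dR_def using qpd_cong by metis
lemma dL_cong: "open \<Omega> \<Longrightarrow> x \<in> \<Omega> \<Longrightarrow> (\<And>y. y \<in> \<Omega> \<Longrightarrow> G y = H y) \<Longrightarrow> dL G x = dL H x"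
  unfolding dL_def using qpd_cong by metis
lemma dbarR_cong: "open \<Omega> \<Longrightarrow> x \<in> \<Omega> \<Longrightarrow> (\<And>y. y \<in> \<Omega> \<Longrightarrow> G y = H y) \<Longrightarrow> dbarR G x = dbarR H x"
  unfolding dbarR_def using qpd_cong by metis
lemma dbarL_cong: "open \<Omega> \<Longrightarrow> x \<in> \<Omega> \<Longrightarrow> (\<And>y. y \<in> \<Omega> \<Longrightarrow> G y = H y) \<Longrightarrow> dbarL G x = dbarL H x"
  unfolding dbarL_def using qpd_cong by metis

lemma d2_cong: "open \<Omega> \<Longrightarrow> x \<in> \<Omega> \<Longrightarrow> (\<And>y. y \<in> \<Omega> \<Longrightarrow> G y = H y) \<Longrightarrow> d2 G x = d2 H x"
  unfolding d2_def by (rule dL_cong) (auto intro: dR_cong)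
lemma dbar2_cong: "open \<Omega> \<Longrightarrow> x \<in> \<Omega> \<Longrightarrow> (\<And>y. y \<in> \<Omega> \<Longrightarrow> G y = H y) \<Longrightarrow> dbar2 G x = dbar2 H x"
  unfolding dbar2_def by (rule dbarL_cong) (auto intro: dbarR_cong)

lemma d2_zero: "d2 (\<lambda>y. qzero) x = qzero"
  by (simp add: d2_def dL_def dR_def qpd_def qadd_def qmult_def qneg_def qe1_def qe2_def qzero_def)
lemma dbar2_zero: "dbar2 (\<lambda>y. qzero) x = qzero"
  by (simp add: dbar2_def dbarL_def dbarR_def qpd_def qadd_def qmult_def qneg_def qe1_def qe2_def qzero_def)

lemma quat_zeroI: "qc0 p = 0 \<Longrightarrow> qc1 p = 0 \<Longrightarrow> qc2 p = 0 \<Longrightarrow> qc3 p = 0 \<Longrightarrow> p = qzero"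
  by (cases p) (simp add: qzero_def)

lemma lap_zero: "laplace3 (laplace3 (\<lambda>y. 0)) x = 0"
  by (simp add: laplace3_fun)

theorem proposition2p2:
  fixes \<Omega> :: "R3 set"
  assumes dom: "open \<Omega>" "connected \<Omega>" "\<Omega> \<noteq> {}"
  shows "(\<forall>b :: R3 \<Rightarrow> real. smooth_on \<Omega> b \<and> biharmonic_on \<Omega> b \<longrightarrow>
            inframonogenic_on \<Omega> (d2 (\<lambda>x. qreal (b x))) \<and>
            antiinframonogenic_on \<Omega> (dbar2 (\<lambda>x. qreal (b x))))
       \<and> (\<forall>f :: R3 \<Rightarrow> quat. qsmooth_on \<Omega> f \<and> (\<forall>x\<in>\<Omega>. qc3 (f x) = 0) \<and>
            (inframonogenic_on \<Omega> f \<or> antiinframonogenic_on \<Omega> f) \<longrightarrow>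
            biharmonic_on \<Omega> (\<lambda>x. qc0 (f x)) \<and> biharmonic_on \<Omega> (\<lambda>x. qc1 (f x)) \<and>
            biharmonic_on \<Omega> (\<lambda>x. qc2 (f x)))"
proof (intro conjI allI impI)
  fix b :: "R3 \<Rightarrow> real"
  assume hb: "smooth_on \<Omega> b \<and> biharmonic_on \<Omega> b"
  have qs: "qsmooth_on \<Omega> (\<lambda>x. qreal (b x))"
    using hb by (simp add: qsmooth_on_def qreal_def smooth_const)
  have bh: "laplace3 (laplace3 b) x = 0" if "x \<in> \<Omega>" for x
    using hb that by (simp add: biharmonic_on_def)
  show "inframonogenic_on \<Omega> (d2 (\<lambda>x. qreal (b x)))"
    unfolding inframonogenic_on_def
  proof
    fix x assume x: "x \<in> \<Omega>"
    show "dbar2 (d2 (\<lambda>x. qreal (b x))) x = qzero"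
      using I12[OF dom(1) qs x] bh[OF x] by (intro quat_zeroI) (simp_all add: qreal_def lap_zero)
  qed
  show "antiinframonogenic_on \<Omega> (dbar2 (\<lambda>x. qreal (b x)))"
    unfolding antiinframonogenic_on_def
  proof
    fix x assume x: "x \<in> \<Omega>"
    show "d2 (dbar2 (\<lambda>x. qreal (b x))) x = qzero"
      using I12[OF dom(1) qs x] bh[OF x] by (intro quat_zeroI) (simp_all add: qreal_def lap_zero)
  qed
next
  fix f :: "R3 \<Rightarrow> quat"
  assume hf: "qsmooth_on \<Omega> f \<and> (\<forall>x\<in>\<Omega>. qc3 (f x) = 0) \<and>
            (inframonogenic_on \<Omega> f \<or> antiinframonogenic_on \<Omega> f)"
  have key: "laplace3 (laplace3 (\<lambda>y. qc0 (f y))) x = 0 \<and> laplace3 (laplace3 (\<lambda>y. qc1 (f y))) x = 0 \<and>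
     laplace3 (laplace3 (\<lambda>y. qc2 (f y))) x = 0" if x: "x \<in> \<Omega>" for x
  proof -
    note I = I12[OF dom(1) _ x, of f] 
    from hf consider "inframonogenic_on \<Omega> f" | "antiinframonogenic_on \<Omega> f" by blast
    then show ?thesis
    proof cases
      case 1
      then have "d2 (dbar2 f) x = d2 (\<lambda>y. qzero) x"
        by (intro d2_cong[OF dom(1) x]) (auto simp: inframonogenic_on_def)
      then have "d2 (dbar2 f) x = qzero" by (simp add: d2_zero)
      then show ?thesis using I hf by (simp add: qzero_def)
    next
      case 2
      then have "dbar2 (d2 f) x = dbar2 (\<lambda>y. qzero) x"
        by (intro dbar2_cong[OF dom(1) x]) (auto simp: antiinframonogenic_on_def)
      then have "dbar2 (d2 f) x = qzero" by (simp add: dbar2_zero)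
      then show ?thesis using I hf by (simp add: qzero_def)
    qed
  qed
  show "biharmonic_on \<Omega> (\<lambda>x. qc0 (f x))" using key by (simp add: biharmonic_on_def)
  show "biharmonic_on \<Omega> (\<lambda>x. qc1 (f x))" using key by (simp add: biharmonic_on_def)
  show "biharmonic_on \<Omega> (\<lambda>x. qc2 (f x))" using key by (simp add: biharmonic_on_def)
qed

end
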